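(* Let $p\geq 5$ be a prime and let $\mathcal{A}$ be a cyclotomic $S$-ring over $C_{3p}=C_3\times C_p$ such that $\mathrm{rk}(\mathcal{A}_{C_p})=2$ and $\mathcal{A}\neq\mathcal{A}_{C_3}\otimes\mathcal{A}_{C_p}$. Then $\mathcal{A}=\mathcal{A}_0$.
   Context: For a finite group $G$ with identity $e$ and $X\subseteq G$ write $\underline{X}=\sum_{x\in X}x$. An $S$-ring over $G$ is a subring $\mathcal{A}\subseteq\mathbb{Z}G$ spanned by $\{\underline{X}:X\in\mathcal{S}(\mathcal{A})\}$ for a partition $\mathcal{S}(\mathcal{A})$ of $G$ (basic sets) containing $\{e\}$ and closed under inversion; $\mathrm{rk}(\mathcal{A})=|\mathcal{S}(\mathcal{A})|$. A subgroup $U$ with $\underline{U}\in\mathcal{A}$ is an $\mathcal{A}$-subgroup, and then $\mathcal{A}_U$ is the $S$-ring over $U$ whose basic sets are the basic sets of $\mathcal{A}$ contained in $U$. For $K\leq\mathrm{Aut}(G)$, $\mathrm{Cyc}(K,G)$ is the $S$-ring whose basic sets are the orbits of $K$ on $G$; such $S$-rings are called cyclotomic. If $\mathcal{A}_1,\mathcal{A}_2$ are $S$-rings over $G_1,G_2$, the tensor product $\mathcal{A}_1\otimes\mathcal{A}_2$ is the $S$-ring over $G_1\times G_2$ with basic sets $X_1\times X_2$, $X_i\in\mathcal{S}(\mathcal{A}_i)$. Identify $\mathrm{Aut}(C_{3p})=\mathrm{Aut}(C_3)\times\mathrm{Aut}(C_p)$. Let $W_0$ be the subgroup of $\mathrm{Aut}(C_3)\times\mathrm{Aut}(C_p)$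 consisting of pairs $(\alpha,\beta)$ such that $\alpha$ is trivial if and only if $\beta$ lies in the subgroup of index $2$ of $\mathrm{Aut}(C_p)$ (the unique nontrivial subdirect product of $\mathrm{Aut}(C_3)$ and $\mathrm{Aut}(C_p)$), and let $\mathcal{A}_0=\mathrm{Cyc}(W_0,C_{3p})$. *)

theory Defs
  imports "HOL-Algebra.Algebra"
begin

text \<open>S-rings are represented by their partition of basic sets S(A).
  The cyclotomic S-ring Cyc(K,G) has as basic sets the K-orbits on G.\<close>

definition cyc_basic :: "('a, 'b) monoid_scheme \<Rightarrow> ('a \<Rightarrow> 'a) set \<Rightarrow> 'a set set" where
  "cyc_basic G K = {{\<sigma> x | \<sigma>. \<sigma> \<in> K} | x. x \<in> carrier G}"

definition restr_basic :: "'a set set \<Rightarrow> 'a set \<Rightarrow> 'a set set" where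
  "restr_basic S U = {Y. Y \<in> S \<and> Y \<subseteq> U}"

definition rk :: "'a set set \<Rightarrow> nat" where
  "rk S = card S"

text \<open>Tensor product A_U (x) A_V, transported to G = U x V via (u,v) |-> u v.\<close>
definition tensor_basic ::
  "('a, 'b) monoid_scheme \<Rightarrow> 'a set set \<Rightarrow> 'a set set \<Rightarrow> 'a set set" where
  "tensor_basic G S1 S2 = {(\<lambda>(x, y). x \<otimes>\<^bsub>G\<^esub> y) ` (P \<times> Y) | P Y. P \<in> S1 \<and> Y \<in> S2}"

definition C3p :: "nat \<Rightarrow> (int \<times> int) monoid" where
  "C3p p = integer_mod_group 3 \<times>\<times> integer_mod_group p"

definition C3_sub :: "nat \<Rightarrow> (int \<times> int) set" where
  "C3_sub p = carrier (integer_mod_group 3) \<times> {0}"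

definition Cp_sub :: "nat \<Rightarrow> (int \<times> int) set" where
  "Cp_sub p = {0} \<times> carrier (integer_mod_group p)"

definition index2_sub :: "nat \<Rightarrow> (int \<Rightarrow> int) set" where
  "index2_sub p = (THE H. subgroup H (AutoGroup (integer_mod_group p)) \<and>
       card (carrier (AutoGroup (integer_mod_group p))) = 2 * card H)"

text \<open>W_0, viewed inside Aut(C_3 x C_p) = Aut(C_3) x Aut(C_p):
  automorphisms acting as (a,b) |-> (alpha a, beta b) with
  alpha trivial iff beta in the index-2 subgroup.\<close>
definition W0 :: "nat \<Rightarrow> (int \<times> int \<Rightarrow> int \<times> int) set" where
  "W0 p = {\<sigma> \<in> auto (C3p p). \<exists>\<alpha> \<in> auto (integer_mod_group 3). \<exists>\<beta> \<in> auto (integer_mod_group p).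
      (\<forall>a \<in> carrier (integer_mod_group 3). \<forall>b \<in> carrier (integer_mod_group p).
          \<sigma> (a, b) = (\<alpha> a, \<beta> b)) \<and>
      ((\<forall>a \<in> carrier (integer_mod_group 3). \<alpha> a = a) \<longleftrightarrow> \<beta> \<in> index2_sub p)}"

end

theory Submission
  imports Defs
begin

abbreviation Zm :: "nat \<Rightarrow> int monoid" where "Zm n \<equiv> integer_mod_group n"

definition mm :: "nat \<Rightarrow> int \<Rightarrow> int \<Rightarrow> int" where
  "mm n u = (\<lambda>x\<in>{0..<int n}. (u * x) mod int n)"

definition MM :: "nat \<Rightarrow> int \<Rightarrow> int \<Rightarrow> int \<times> int \<Rightarrow> int \<times> int" where
  "MM p u v = (\<lambda>z\<in>carrier (C3p p). ((u * fst z) mod 3, (v * snd z) mod int p))"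

lemma carrier_Zm: "n > 0 \<Longrightarrow> carrier (Zm n) = {0..<int n}"
  by (simp add: carrier_integer_mod_group)

lemma carrier_C3p: "p > 0 \<Longrightarrow> carrier (C3p p) = {0..<3} \<times> {0..<int p}"
  by (simp add: C3p_def carrier_integer_mod_group)

lemma pow_DP: "(x,y) [^]\<^bsub>G \<times>\<times> H\<^esub> (k::nat) = (x [^]\<^bsub>G\<^esub> k, y [^]\<^bsub>H\<^esub> k)"
  by (induction k) (simp_all add: DirProd_def)

lemma prime_unit_dvd:
  assumes "Factorial_Ring.prime n" "u \<in> {1..<int n}" "int n dvd u * z"
  shows "int n dvd z"
proof -
  have pn: "Factorial_Ring.prime (int n)" using assms(1) by (simp add: prime_nat_int_transfer)
  have "\<not> int n dvd u" using assms(2) by (auto dest: zdvd_imp_le)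
  then have "coprime (int n) u" using pn by (simp add: prime_imp_coprime)
  then show ?thesis using assms(3) by (metis coprime_dvd_mult_right_iff)
qed

lemma mm_auto:
  assumes "Factorial_Ring.prime n" "u \<in> {1..<int n}"
  shows "mm n u \<in> auto (Zm n)"
proof -
  have n2: "n \<ge> 2" using assms(1) prime_ge_2_nat by blast
  have C: "carrier (Zm n) = {0..<int n}" using n2 by (simp add: carrier_Zm)
  have hom: "mm n u \<in> hom (Zm n) (Zm n)"
    unfolding hom_def C
  proof (intro CollectI conjI ballI)
    show "mm n u \<in> {0..<int n} \<rightarrow> {0..<int n}" using n2 by (auto simp: mm_def)
    fix x y assume xy: "x \<in> {0..<int n}" "y \<in> {0..<int n}"
    then have "(x + y) mod int n \<in> {0..<int n}" using n2 by auto
    then show "mm n u (x \<otimes>\<^bsub>Zm n\<^esub> y) = mm n u x \<otimes>\<^bsub>Zm n\<^esub> mm n u y"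
      using xy by (simp add: mm_def mod_add_eq mod_mult_right_eq distrib_left)
  qed
  have inj: "inj_on (mm n u) {0..<int n}"
  proof (rule inj_onI)
    fix x y assume xy: "x \<in> {0..<int n}" "y \<in> {0..<int n}" "mm n u x = mm n u y"
    then have "(u * x) mod int n = (u * y) mod int n" by (simp add: mm_def)
    then have "int n dvd u * (x - y)" by (metis mod_eq_dvd_iff right_diff_distrib)
    then have "int n dvd (x - y)" using prime_unit_dvd assms by blast
    then show "x = y" using xy by (metis atLeastLessThan_iff mod_pos_pos_trivial mod_eq_dvd_iff)
  qed
  have img: "mm n u ` {0..<int n} \<subseteq> {0..<int n}" using n2 by (auto simp: mm_def)
  have "bij_betw (mm n u) {0..<int n} {0..<int n}"
    using inj endo_inj_surj[OF _ img inj] by (simp add: bij_betw_def)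
  moreover have "mm n u \<in> extensional {0..<int n}" by (simp add: mm_def)
  ultimately show ?thesis using hom by (simp add: auto_def Bij_def C)
qed

lemma auto_mm:
  assumes "Factorial_Ring.prime n" "\<sigma> \<in> auto (Zm n)"
  shows "\<sigma> = mm n (\<sigma> 1)" "\<sigma> 1 \<in> {1..<int n}"
proof -
  have n2: "n \<ge> 2" using assms(1) prime_ge_2_nat by blast
  have C: "carrier (Zm n) = {0..<int n}" using n2 by (simp add: carrier_Zm)
  have hom: "\<sigma> \<in> hom (Zm n) (Zm n)" and ext: "\<sigma> \<in> extensional {0..<int n}"
    and bij: "bij_betw \<sigma> {0..<int n} {0..<int n}"
    using assms(2) by (auto simp: auto_def Bij_def C)
  have one: "1 \<in> carrier (Zm n)" using n2 C by auto
  have val: "\<sigma> x = (\<sigma> 1 * x) mod int n" if x: "x \<in> {0..<int n}" for x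
  proof -
    have x0: "0 \<le> x" using x by simp
    have e: "1 [^]\<^bsub>Zm n\<^esub> nat x = x" using x by simp
    have "\<sigma> (1 [^]\<^bsub>Zm n\<^esub> nat x) = \<sigma> 1 [^]\<^bsub>Zm n\<^esub> nat x"
      by (rule hom_nat_pow[OF hom one]) simp_all
    then have "\<sigma> x = (int (nat x) * \<sigma> 1) mod int n" unfolding e by simp
    then show ?thesis using x0 by (simp add: mult.commute)
  qed
  show "\<sigma> = mm n (\<sigma> 1)"
  proof
    fix x show "\<sigma> x = mm n (\<sigma> 1) x"
      using val ext by (cases "x \<in> {0..<int n}") (auto simp: mm_def extensional_def)
  qed
  have s1: "\<sigma> 1 \<in> {0..<int n}" using hom one C by (auto simp: hom_def)
  have s0: "\<sigma> 0 = 0" using val[of 0] n2 by simp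
  have "\<sigma> 1 \<noteq> 0"
  proof
    assume "\<sigma> 1 = 0"
    then have "\<sigma> 1 = \<sigma> 0" using s0 by simp
    moreover have "inj_on \<sigma> {0..<int n}" using bij by (simp add: bij_betw_def)
    ultimately show False using n2 by (auto dest: inj_onD)
  qed
  then show "\<sigma> 1 \<in> {1..<int n}" using s1 by auto
qed


lemma group_C3p: "group (C3p p)"
  by (simp add: C3p_def DirProd_group)

lemma pow_C3p: "(x,y) [^]\<^bsub>C3p p\<^esub> (k::nat) = ((int k * x) mod 3, (int k * y) mod int p)"
  by (simp add: C3p_def pow_DP)

lemma mult_C3p: "(a,b) \<otimes>\<^bsub>C3p p\<^esub> (c,d) = ((a + c) mod 3, (b + d) mod int p)"
  by (simp add: C3p_def)

lemma one_C3p: "\<one>\<^bsub>C3p p\<^esub> = (0,0)"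
  by (simp add: C3p_def)

lemma auto_MM:
  assumes pr: "Factorial_Ring.prime p" and p5: "p \<ge> 5" and s: "\<sigma> \<in> auto (C3p p)"
  shows "\<sigma> = MM p (fst (\<sigma> (1,0))) (snd (\<sigma> (0,1)))"
    "fst (\<sigma> (1,0)) \<in> {1..<3}" "snd (\<sigma> (0,1)) \<in> {1..<int p}"
proof -
  let ?G = "C3p p"
  have C: "carrier ?G = {0..<3} \<times> {0..<int p}" using p5 by (simp add: carrier_C3p)
  have hom: "\<sigma> \<in> hom ?G ?G" and ext: "\<sigma> \<in> extensional (carrier ?G)"
    and bij: "bij_betw \<sigma> (carrier ?G) (carrier ?G)"
    using s by (auto simp: auto_def Bij_def)
  have inj: "inj_on \<sigma> (carrier ?G)" using bij by (simp add: bij_betw_def)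
  have gG: "group ?G" by (rule group_C3p)
  have e1: "(1,0) \<in> carrier ?G" and e2: "(0,1) \<in> carrier ?G" and e0: "(0,0) \<in> carrier ?G"
    using C p5 by auto
  obtain x1 y1 where s1: "\<sigma> (1,0) = (x1,y1)" by fastforce
  obtain x2 y2 where s2: "\<sigma> (0,1) = (x2,y2)" by fastforce
  have s1c: "(x1,y1) \<in> carrier ?G" using hom e1 s1 by (metis hom_in_carrier)
  have s2c: "(x2,y2) \<in> carrier ?G" using hom e2 s2 by (metis hom_in_carrier)
  have s0: "\<sigma> (0,0) = (0,0)" using hom_one[OF hom gG gG] by (simp add: one_C3p)
  have pw: "\<sigma> (z [^]\<^bsub>?G\<^esub> k) = \<sigma> z [^]\<^bsub>?G\<^esub> k" if "z \<in> carrier ?G" for z and k :: nat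
    by (rule hom_nat_pow[OF hom that gG gG])
  have A: "\<sigma> (a,0) = ((int (nat a) * x1) mod 3, (int (nat a) * y1) mod int p)" if "a \<in> {0..<3}" for a
  proof -
    have "(1::int,0::int) [^]\<^bsub>?G\<^esub> nat a = (a,0)" using that by (simp add: pow_C3p)
    then show ?thesis using pw[OF e1, of "nat a"] s1 by (simp add: pow_C3p)
  qed
  have B: "\<sigma> (0,b) = ((int (nat b) * x2) mod 3, (int (nat b) * y2) mod int p)" if "b \<in> {0..<int p}" for b
  proof -
    have "(0::int,1::int) [^]\<^bsub>?G\<^esub> nat b = (0,b)" using that by (simp add: pow_C3p)
    then show ?thesis using pw[OF e2, of "nat b"] s2 by (simp add: pow_C3p)
  qed
  have ip: "Factorial_Ring.prime (int p)" using pr by (simp add: prime_nat_int_transfer)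
  have y10: "y1 = 0"
  proof -
    have "(1::int,0::int) [^]\<^bsub>?G\<^esub> (3::nat) = (0,0)" by (simp add: pow_C3p)
    then have "(x1,y1) [^]\<^bsub>?G\<^esub> (3::nat) = (0,0)" using pw[OF e1, of 3] s1 s0 by simp
    then have "(3 * y1) mod int p = 0" by (simp add: pow_C3p)
    then have "int p dvd 3 * y1" by auto
    then have "int p dvd 3 \<or> int p dvd y1" using ip prime_dvd_multD by blast
    moreover have "\<not> int p dvd 3" using p5 by (auto dest: zdvd_imp_le)
    ultimately have "int p dvd y1" by blast
    then show ?thesis using s1c C by (auto dest: zdvd_imp_le)
  qed
  have x20: "x2 = 0"
  proof -
    have "(0::int,1::int) [^]\<^bsub>?G\<^esub> p = (0,0)" by (simp add: pow_C3p)
    then have "(x2,y2) [^]\<^bsub>?G\<^esub> p = (0,0)" using pw[OF e2, of p] s2 s0 by simp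
    then have "(int p * x2) mod 3 = 0" by (simp add: pow_C3p)
    then have "(3::int) dvd int p * x2" by auto
    moreover have "Factorial_Ring.prime (3::int)" by simp
    ultimately have "3 dvd int p \<or> (3::int) dvd x2" using prime_dvd_multD by blast
    moreover have "\<not> (3::int) dvd int p"
    proof
      assume "(3::int) dvd int p"
      then have "(3::nat) dvd p" by presburger
      then have "3 = p" using pr p5 by (metis prime_nat_iff numeral_eq_one_iff semiring_norm(86))
      then show False using p5 by simp
    qed
    ultimately have "(3::int) dvd x2" by blast
    then show ?thesis using s2c C by (auto dest: zdvd_imp_le)
  qed
  show "\<sigma> = MM p (fst (\<sigma> (1,0))) (snd (\<sigma> (0,1)))"
  proof
    fix z show "\<sigma> z = MM p (fst (\<sigma> (1,0))) (snd (\<sigma> (0,1))) z"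
    proof (cases "z \<in> carrier ?G")
      case False then show ?thesis using ext extensional_arb[OF ext False] by (simp add: MM_def)
    next
      case True
      then obtain a b where z: "z = (a,b)" "a \<in> {0..<3}" "b \<in> {0..<int p}" using C by auto
      have "(a,0) \<otimes>\<^bsub>?G\<^esub> (0,b) = (a,b)" using z by (simp add: mult_C3p)
      moreover have "(a,0) \<in> carrier ?G" "(0,b) \<in> carrier ?G" using z C by auto
      ultimately have "\<sigma> (a,b) = \<sigma> (a,0) \<otimes>\<^bsub>?G\<^esub> \<sigma> (0,b)" using hom by (metis hom_mult)
      also have "\<dots> = ((a * x1) mod 3, (b * y2) mod int p)"
        using A[OF z(2)] B[OF z(3)] y10 x20 z by (simp add: mult_C3p)
      finally show ?thesis using z True s1 s2 by (simp add: MM_def mult.commute)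
    qed
  qed
  have "x1 \<noteq> 0"
  proof
    assume "x1 = 0" then have "\<sigma> (1,0) = \<sigma> (0,0)" using s1 s0 y10 by simp
    then show False using inj e1 e0 by (auto dest: inj_onD)
  qed
  then show "fst (\<sigma> (1,0)) \<in> {1..<3}" using s1 s1c C by auto
  have "y2 \<noteq> 0"
  proof
    assume "y2 = 0" then have "\<sigma> (0,1) = \<sigma> (0,0)" using s2 s0 x20 by simp
    then show False using inj e2 e0 by (auto dest: inj_onD)
  qed
  then show "snd (\<sigma> (0,1)) \<in> {1..<int p}" using s2 s2c C by auto
qed


lemma AutoGroup_mult: "x \<in> auto G \<Longrightarrow> y \<in> auto G \<Longrightarrow> x \<otimes>\<^bsub>AutoGroup G\<^esub> y = compose (carrier G) x y"
  by (simp add: AutoGroup_def BijGroup_def auto_def)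

lemma AutoGroup_one: "\<one>\<^bsub>AutoGroup G\<^esub> = (\<lambda>x\<in>carrier G. x)"
  by (simp add: AutoGroup_def BijGroup_def)

lemma AutoGroup_carrier: "carrier (AutoGroup G) = auto G"
  by (simp add: AutoGroup_def)

lemma mm_compose: "compose {0..<int n} (mm n u) (mm n v) = mm n ((u * v) mod int n)"
proof
  fix x show "compose {0..<int n} (mm n u) (mm n v) x = mm n ((u * v) mod int n) x"
  proof (cases "x \<in> {0..<int n}")
    case True
    then have "n > 0" by auto
    then have "(v * x) mod int n \<in> {0..<int n}" by auto
    then show ?thesis using True
      by (simp add: compose_def mm_def mod_mult_right_eq mod_mult_left_eq mult.assoc)
  qed (auto simp: compose_def mm_def)
qed

lemma mm_eval1: "n \<ge> 2 \<Longrightarrow> mm n u 1 = u mod int n"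
  by (simp add: mm_def)

lemma mm_one: "mm n 1 = (\<lambda>x\<in>{0..<int n}. x)"
  by (auto simp: mm_def)

lemma mm_inj: assumes "n \<ge> 2" "mm n u = mm n v" "u \<in> {0..<int n}" "v \<in> {0..<int n}"
  shows "u = v"
proof -
  have "u mod int n = v mod int n" using arg_cong[OF assms(2), of "\<lambda>f. f 1"] assms(1) by (simp only: mm_eval1)
  then show ?thesis using assms by simp
qed

lemma MM_compose:
  assumes "p > 0"
  shows "compose (carrier (C3p p)) (MM p u v) (MM p u' v') = MM p ((u * u') mod 3) ((v * v') mod int p)"
proof
  have C: "carrier (C3p p) = {0..<3} \<times> {0..<int p}" using assms by (simp add: carrier_C3p)
  fix z show "compose (carrier (C3p p)) (MM p u v) (MM p u' v') z = MM p ((u * u') mod 3) ((v * v') mod int p) z"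
  proof (cases "z \<in> carrier (C3p p)")
    case True
    then have "((u' * fst z) mod 3, (v' * snd z) mod int p) \<in> carrier (C3p p)" using C assms by auto
    then show ?thesis using True
      by (simp add: compose_def MM_def mod_mult_right_eq mod_mult_left_eq mult.assoc)
  qed (auto simp: compose_def MM_def)
qed

lemma MM_eval: "p \<ge> 2 \<Longrightarrow> MM p u v (1,1) = (u mod 3, v mod int p)"
  by (simp add: MM_def carrier_C3p)

lemma MM_one: "MM p 1 1 = (\<lambda>x\<in>carrier (C3p p). x)"
  by (auto simp: MM_def carrier_C3p C3p_def carrier_integer_mod_group split: if_splits)

lemma MM_inj: assumes "p \<ge> 2" "MM p u v = MM p u' v'" "u \<in> {0..<3}" "u' \<in> {0..<3}"
   "v \<in> {0..<int p}" "v' \<in> {0..<int p}"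
  shows "u = u' \<and> v = v'"
proof -
  have "(u mod 3, v mod int p) = (u' mod 3, v' mod int p)" using arg_cong[OF assms(2), of "\<lambda>f. f (1,1)"] assms(1) by (simp only: MM_eval)
  then show ?thesis using assms by simp
qed

lemma index2_squares:
  fixes G :: "('a, 'b) monoid_scheme" (structure)
  assumes G: "group G" and fin: "finite (carrier G)" and H: "subgroup H G"
    and c: "card (carrier G) = 2 * card H" and g: "g \<in> carrier G"
  shows "g \<otimes>\<^bsub>G\<^esub> g \<in> H"
proof (rule ccontr)
  interpret group G by (rule G)
  assume nH: "g \<otimes> g \<notin> H"
  have Hs: "H \<subseteq> carrier G" using H by (rule subgroup.subset)
  have gH: "g \<notin> H"
  proof
    assume "g \<in> H" then have "g \<otimes> g \<in> H" using H by (simp add: subgroup.m_closed)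
    then show False using nH by simp
  qed
  have finH: "finite H" using fin Hs finite_subset by blast
  have inj: "inj_on (\<lambda>h. g \<otimes> h) H"
  proof (rule inj_onI)
    fix a b assume "a \<in> H" "b \<in> H" "g \<otimes> a = g \<otimes> b"
    then show "a = b" using l_cancel[of g a b] Hs g by auto
  qed
  have sub: "(\<lambda>h. g \<otimes> h) ` H \<subseteq> carrier G - H"
  proof
    fix y assume "y \<in> (\<lambda>h. g \<otimes> h) ` H"
    then obtain h where h: "h \<in> H" "y = g \<otimes> h" by auto
    have hc: "h \<in> carrier G" using h Hs by auto
    have "y \<notin> H"
    proof
      assume "y \<in> H"
      then have "y \<otimes> inv h \<in> H" using h H by (simp add: subgroup.m_closed subgroup.m_inv_closed)
      moreover have "y \<otimes> inv h = g" using h hc g by (simp add: m_assoc)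
      ultimately show False using gH by simp
    qed
    then show "y \<in> carrier G - H" using h hc g by auto
  qed
  have "card (carrier G - H) = card H" using c card_Diff_subset[OF finH Hs] by simp
  then have eq: "(\<lambda>h. g \<otimes> h) ` H = carrier G - H"
    using card_seteq[OF _ sub] fin card_image[OF inj] by simp
  have "g \<otimes> g \<in> carrier G - H" using nH g by auto
  then obtain h where h: "h \<in> H" "g \<otimes> g = g \<otimes> h" using eq by force
  then have "g = h" using l_cancel[of g g h] g Hs by auto
  then show False using gH h by simp
qed

lemma square_count:
  assumes pr: "Factorial_Ring.prime p"
  shows "card {1..<int p} \<le> 2 * card ((\<lambda>v. (v * v) mod int p) ` {1..<int p})"
proof -
  let ?U = "{1..<int p}" and ?f = "\<lambda>v. (v * v) mod int p"
  have ip: "Factorial_Ring.prime (int p)" using pr by (simp add: prime_nat_int_transfer)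
  have fib: "card {v \<in> ?U. ?f v = y} \<le> 2" if "y \<in> ?f ` ?U" for y
  proof -
    obtain v0 where v0: "v0 \<in> ?U" "?f v0 = y" using \<open>y \<in> ?f ` ?U\<close> by auto
    have "{v \<in> ?U. ?f v = y} \<subseteq> {v0, int p - v0}"
    proof
      fix v assume v: "v \<in> {v \<in> ?U. ?f v = y}"
      then have "(v * v) mod int p = (v0 * v0) mod int p" using v0 by simp
      then have "int p dvd (v * v - v0 * v0)" by (simp add: mod_eq_dvd_iff)
      moreover have "v * v - v0 * v0 = (v - v0) * (v + v0)" by (simp add: algebra_simps)
      ultimately have "int p dvd (v - v0) \<or> int p dvd (v + v0)" using ip prime_dvd_multD by metis
      moreover have "int p dvd (v - v0) \<Longrightarrow> v = v0"
      proof -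
        assume d: "int p dvd (v - v0)"
        then obtain k where k: "v - v0 = int p * k" by (auto elim: dvdE)
        have b: "- int p < v - v0" "v - v0 < int p" using v v0 by auto
        have "k \<ge> 1 \<Longrightarrow> int p * k \<ge> int p" using mult_left_mono[of 1 k "int p"] by simp
        moreover have "k \<le> -1 \<Longrightarrow> int p * k \<le> - int p"
          using mult_left_mono[of k "-1" "int p"] by simp
        ultimately have "k = 0" using b k by linarith
        then show "v = v0" using k by simp
      qed
      moreover have "int p dvd (v + v0) \<Longrightarrow> v = int p - v0"
      proof -
        assume d: "int p dvd (v + v0)"
        then obtain k where k: "v + v0 = int p * k" by (auto elim: dvdE)
        have b: "0 < v + v0" "v + v0 < 2 * int p" using v v0 by auto
        have "k \<ge> 2 \<Longrightarrow> int p * k \<ge> 2 * int p"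
          using mult_left_mono[of 2 k "int p"] by (simp add: mult.commute)
        moreover have "k \<le> 0 \<Longrightarrow> int p * k \<le> 0"
          by (simp add: mult_nonneg_nonpos)
        ultimately have "k = 1" using b k by linarith
        then show "v = int p - v0" using k by simp
      qed
      ultimately show "v \<in> {v0, int p - v0}" by auto
    qed
    then have "card {v \<in> ?U. ?f v = y} \<le> card {v0, int p - v0}" by (rule card_mono[rotated]) simp
    also have "\<dots> \<le> 2" by (simp add: card_insert_if)
    finally show ?thesis .
  qed
  have e: "?U = (\<Union>y\<in>?f ` ?U. {v \<in> ?U. ?f v = y})" by auto
  have "card (\<Union>y\<in>?f ` ?U. {v \<in> ?U. ?f v = y}) \<le> (\<Sum>y\<in>?f ` ?U. card {v \<in> ?U. ?f v = y})"
    by (rule card_UN_le) simp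
  then have "card ?U \<le> (\<Sum>y\<in>?f ` ?U. card {v \<in> ?U. ?f v = y})" using e by simp
  also have "\<dots> \<le> (\<Sum>y\<in>?f ` ?U. 2)" by (rule sum_mono) (rule fib)
  also have "\<dots> = 2 * card (?f ` ?U)" by simp
  finally show ?thesis .
qed


lemma index2_eq:
  assumes pr: "Factorial_Ring.prime p" and p5: "p \<ge> 5"
    and H0s: "H0 \<subseteq> {1..<int p}" and one: "1 \<in> H0"
    and mul: "\<And>v w. v \<in> H0 \<Longrightarrow> w \<in> H0 \<Longrightarrow> (v * w) mod int p \<in> H0"
    and inv: "\<And>v. v \<in> H0 \<Longrightarrow> \<exists>w\<in>H0. (v * w) mod int p = 1"
    and cH: "card {1..<int p} = 2 * card H0"
  shows "index2_sub p = mm p ` H0"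
proof -
  let ?AG = "AutoGroup (Zm p)" and ?U = "{1..<int p}"
  have p2: "p \<ge> 2" using p5 by simp
  have gAG: "group ?AG" by (rule group.AutoGroup[OF group_integer_mod_group])
  have CZ: "carrier (Zm p) = {0..<int p}" using p5 by (simp add: carrier_Zm)
  have cAG: "carrier ?AG = mm p ` ?U"
  proof
    show "carrier ?AG \<subseteq> mm p ` ?U"
    proof
      fix \<sigma> assume "\<sigma> \<in> carrier ?AG"
      then have s: "\<sigma> \<in> auto (Zm p)" by (simp add: AutoGroup_carrier)
      show "\<sigma> \<in> mm p ` ?U" by (rule image_eqI[where f="mm p" and x="\<sigma> 1", OF auto_mm(1)[OF pr s] auto_mm(2)[OF pr s]])
    qed
    show "mm p ` ?U \<subseteq> carrier ?AG" using mm_auto[OF pr] by (auto simp: AutoGroup_carrier)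
  qed
  have injU: "inj_on (mm p) ?U" using mm_inj[OF p2] by (auto intro!: inj_onI)
  have fin: "finite (carrier ?AG)" using cAG by simp
  have cardAG: "card (carrier ?AG) = card ?U" using cAG card_image[OF injU] by simp
  have mult: "mm p v \<otimes>\<^bsub>?AG\<^esub> mm p w = mm p ((v * w) mod int p)" if "v \<in> ?U" "w \<in> ?U" for v w
    using that mm_auto[OF pr] AutoGroup_mult[of "mm p v" "Zm p" "mm p w"] CZ by (simp add: mm_compose)
  have oneAG: "\<one>\<^bsub>?AG\<^esub> = mm p 1" using CZ by (simp add: AutoGroup_one mm_one)
  define Sq where "Sq = mm p ` ((\<lambda>v. (v * v) mod int p) ` ?U)"
  have ip: "Factorial_Ring.prime (int p)" using pr by (simp add: prime_nat_int_transfer)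
  have SqU: "(\<lambda>v. (v * v) mod int p) ` ?U \<subseteq> ?U"
  proof
    fix y assume "y \<in> (\<lambda>v. (v * v) mod int p) ` ?U"
    then obtain v where v: "v \<in> ?U" "y = (v * v) mod int p" by auto
    have nd: "\<not> int p dvd v" using v by (auto dest: zdvd_imp_le)
    then have "\<not> int p dvd v * v" using ip prime_dvd_multD by blast
    then have "y \<noteq> 0" using v by auto
    moreover have "y \<in> {0..<int p}" using v p5 by auto
    ultimately show "y \<in> ?U" by auto
  qed
  have cardSq: "card ?U \<le> 2 * card Sq"
    using square_count[OF pr] card_image[OF inj_on_subset[OF injU SqU]] by (simp add: Sq_def)
  have uniq: "H = Sq" if H: "subgroup H ?AG" "card (carrier ?AG) = 2 * card H" for H
  proof -
    have "Sq \<subseteq> H"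
    proof
      fix x assume "x \<in> Sq"
      then obtain v where v: "v \<in> ?U" "x = mm p ((v * v) mod int p)" by (auto simp: Sq_def)
      have "mm p v \<in> carrier ?AG" using v cAG by auto
      then have "mm p v \<otimes>\<^bsub>?AG\<^esub> mm p v \<in> H" using index2_squares[OF gAG fin H] by blast
      then show "x \<in> H" using v mult by simp
    qed
    moreover have "finite H" using subgroup.subset[OF H(1)] fin finite_subset by blast
    moreover have "card H \<le> card Sq" using H(2) cardAG cardSq by simp
    ultimately show "H = Sq" by (metis card_seteq)
  qed
  have sub: "subgroup (mm p ` H0) ?AG"
  proof (rule group.subgroupI[OF gAG])
    show "mm p ` H0 \<subseteq> carrier ?AG" using cAG H0s by auto
    show "mm p ` H0 \<noteq> {}" using one by auto
  next
    fix a assume "a \<in> mm p ` H0"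
    then obtain v where v: "v \<in> H0" "a = mm p v" by auto
    obtain w where w: "w \<in> H0" "(v * w) mod int p = 1" using inv[OF v(1)] by auto
    have "mm p w \<otimes>\<^bsub>?AG\<^esub> mm p v = \<one>\<^bsub>?AG\<^esub>"
    proof -
      have "w \<in> ?U" "v \<in> ?U" using v w H0s by auto
      then have "mm p w \<otimes>\<^bsub>?AG\<^esub> mm p v = mm p ((w * v) mod int p)" by (rule mult)
      then show ?thesis using w oneAG by (simp add: mult.commute)
    qed
    then have "inv\<^bsub>?AG\<^esub> (mm p v) = mm p w"
      using group.inv_equality[OF gAG] v w H0s cAG by blast
    then show "inv\<^bsub>?AG\<^esub> a \<in> mm p ` H0" using v w by auto
  next
    fix a b assume "a \<in> mm p ` H0" "b \<in> mm p ` H0"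
    then obtain v w where vw: "v \<in> H0" "w \<in> H0" "a = mm p v" "b = mm p w" by auto
    have "v \<in> ?U" "w \<in> ?U" using vw H0s by auto
    then have "a \<otimes>\<^bsub>?AG\<^esub> b = mm p ((v * w) mod int p)" using vw by (simp add: mult)
    then show "a \<otimes>\<^bsub>?AG\<^esub> b \<in> mm p ` H0" using mul[OF vw(1,2)] by simp
  qed
  have cH0: "card (carrier ?AG) = 2 * card (mm p ` H0)"
    using cardAG cH card_image[OF inj_on_subset[OF injU H0s]] by simp
  have "(THE H. subgroup H ?AG \<and> card (carrier ?AG) = 2 * card H) = mm p ` H0"
  proof (rule the_equality)
    show "subgroup (mm p ` H0) ?AG \<and> card (carrier ?AG) = 2 * card (mm p ` H0)" using sub cH0 by simp
    fix H assume "subgroup H ?AG \<and> card (carrier ?AG) = 2 * card H"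
    then show "H = mm p ` H0" using uniq sub cH0 by metis
  qed
  then show ?thesis by (simp add: index2_sub_def)
qed


lemma W0_iff:
  assumes pr: "Factorial_Ring.prime p" and p5: "p \<ge> 5"
    and u: "u \<in> {1..<3}" and v: "v \<in> {1..<int p}" and a: "MM p u v \<in> auto (C3p p)"
    and I: "index2_sub p = mm p ` H0" and H0s: "H0 \<subseteq> {1..<int p}"
  shows "MM p u v \<in> W0 p \<longleftrightarrow> (u = 1 \<longleftrightarrow> v \<in> H0)"
proof -
  have pr3: "Factorial_Ring.prime (3::nat)" by simp
  have C: "carrier (C3p p) = {0..<3} \<times> {0..<int p}" using p5 by (simp add: carrier_C3p)
  have C3: "carrier (Zm 3) = {0..<3}" by (simp add: carrier_Zm)
  have Cp: "carrier (Zm p) = {0..<int p}" using p5 by (simp add: carrier_Zm)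
  have p2: "p \<ge> 2" using p5 by simp
  have MMab: "MM p u v (a,b) = ((u * a) mod 3, (v * b) mod int p)" if "a \<in> {0..<3}" "b \<in> {0..<int p}" for a b
    using that C by (simp add: MM_def)
  have betaH: "mm p v \<in> mm p ` H0 \<longleftrightarrow> v \<in> H0"
  proof
    assume "mm p v \<in> mm p ` H0"
    then obtain w where w: "w \<in> H0" "mm p v = mm p w" by auto
    then have "v = w" using mm_inj[OF p2 w(2)] v H0s by auto
    then show "v \<in> H0" using w by simp
  qed auto
  show ?thesis
  proof
    assume "MM p u v \<in> W0 p"
    then obtain \<alpha> \<beta> where al: "\<alpha> \<in> auto (Zm 3)" and be: "\<beta> \<in> auto (Zm p)"
      and eq0: "\<forall>a \<in> carrier (Zm 3). \<forall>b \<in> carrier (Zm p). MM p u v (a, b) = (\<alpha> a, \<beta> b)"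
      and iff0: "(\<forall>a\<in>carrier (Zm 3). \<alpha> a = a) \<longleftrightarrow> \<beta> \<in> index2_sub p"
      unfolding W0_def by blast
    have eq: "\<And>a b. a \<in> {0..<3} \<Longrightarrow> b \<in> {0..<int p} \<Longrightarrow> MM p u v (a, b) = (\<alpha> a, \<beta> b)"
      using eq0 C3 Cp by blast
    have iff: "(\<forall>a\<in>{0..<3}. \<alpha> a = a) \<longleftrightarrow> \<beta> \<in> index2_sub p" using iff0 C3 by simp
    have "(u, 0) = (\<alpha> 1, \<beta> 0)" using eq[of 1 0] MMab[of 1 0] p5 u by simp
    then have au: "\<alpha> 1 = u" by simp
    have "(0, v) = (\<alpha> 0, \<beta> 1)" using eq[of 0 1] MMab[of 0 1] p5 v by simp
    then have bv: "\<beta> 1 = v" by simp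
    have al': "\<alpha> = mm 3 u" using auto_mm(1)[OF pr3 al] au by simp
    have be': "\<beta> = mm p v" using auto_mm(1)[OF pr be] bv by simp
    have "(\<forall>a\<in>{0..<3}. \<alpha> a = a) \<longleftrightarrow> u = 1"
    proof
      assume "\<forall>a\<in>{0..<3}. \<alpha> a = a" then have "\<alpha> 1 = 1" by simp
      then show "u = 1" using au by simp
    qed (simp add: al' mm_def)
    then show "u = 1 \<longleftrightarrow> v \<in> H0" using iff I be' betaH by simp
  next
    assume iff: "u = 1 \<longleftrightarrow> v \<in> H0"
    have al: "mm 3 u \<in> auto (Zm 3)" using mm_auto[OF pr3] u by simp
    have be: "mm p v \<in> auto (Zm p)" using mm_auto[OF pr v] .
    have eq: "\<forall>a\<in>carrier (Zm 3). \<forall>b\<in>carrier (Zm p). MM p u v (a, b) = (mm 3 u a, mm p v b)"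
      using C3 Cp MMab by (simp add: mm_def)
    have tr: "(\<forall>a\<in>carrier (Zm 3). mm 3 u a = a) \<longleftrightarrow> u = 1"
    proof
      assume "\<forall>a\<in>carrier (Zm 3). mm 3 u a = a" then have "mm 3 u 1 = 1" using C3 by simp
      then show "u = 1" using u by (simp add: mm_def)
    qed (simp add: C3 mm_def)
    show "MM p u v \<in> W0 p" unfolding W0_def
      using a al be eq tr iff I betaH by blast
  qed
qed


definition orb :: "nat \<Rightarrow> (int \<times> int) set \<Rightarrow> int \<times> int \<Rightarrow> (int \<times> int) set" where
  "orb p T z = {((u * fst z) mod 3, (v * snd z) mod int p) | u v. (u, v) \<in> T}"

lemma orbI: "(u,v) \<in> T \<Longrightarrow> ((u * a) mod 3, (v * b) mod int p) \<in> orb p T (a,b)"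
  by (auto simp: orb_def)

lemma orbE: "w \<in> orb p T (a,b) \<Longrightarrow> (\<And>u v. (u,v) \<in> T \<Longrightarrow> w = ((u * a) mod 3, (v * b) mod int p) \<Longrightarrow> P) \<Longrightarrow> P"
  by (auto simp: orb_def)

lemma orb_self:
  assumes "(1,1) \<in> T" "z \<in> {0..<3} \<times> {0..<int p}" shows "z \<in> orb p T z"
proof -
  obtain a b where z: "z = (a,b)" by fastforce
  have "((1 * a) mod 3, (1 * b) mod int p) \<in> orb p T (a,b)" by (rule orbI[OF assms(1)])
  then show ?thesis using z assms(2) by simp
qed

lemma restr_C3:
  assumes "(1,1) \<in> T" "p \<ge> 5"
  shows "restr_basic {orb p T z | z. z \<in> carrier (C3p p)} (C3_sub p) = {orb p T (a,0) | a. a \<in> {0..<3}}"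
proof -
  have C: "carrier (C3p p) = {0..<3} \<times> {0..<int p}" using assms by (simp add: carrier_C3p)
  have C3: "C3_sub p = {0..<3} \<times> {0}" by (simp add: C3_sub_def carrier_Zm)
  show ?thesis
  proof (intro Set.set_eqI iffI)
    fix Y assume Ym: "Y \<in> restr_basic {orb p T z | z. z \<in> carrier (C3p p)} (C3_sub p)"
    have Y1: "Y \<in> {orb p T z | z. z \<in> carrier (C3p p)}" and Y2: "Y \<subseteq> C3_sub p"
      using Ym by (simp_all add: restr_basic_def)
    obtain z where z: "Y = orb p T z" "z \<in> carrier (C3p p)" using Y1 by blast
    obtain a b where zab: "z = (a,b)" by fastforce
    have ab1: "Y = orb p T (a,b)" using z(1) zab by simp
    have ab23: "a \<in> {0..<3}" "b \<in> {0..<int p}" using z(2) zab C by auto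
    note ab = ab1 ab23 Y2
    have "(a,b) \<in> Y" using orb_self[OF assms(1), of "(a,b)" p] ab1 ab23 by simp
    then have "b = 0" using ab(4) C3 by auto
    then have "Y = orb p T (a,0)" using ab1 by simp
    then show "Y \<in> {orb p T (a,0) | a. a \<in> {0..<3}}" using ab23(1) by blast
  next
    fix Y assume "Y \<in> {orb p T (a,0) | a. a \<in> {0..<3}}"
    then obtain a where a: "Y = orb p T (a,0)" "a \<in> {0..<3}" by auto
    have "Y \<subseteq> C3_sub p"
    proof
      fix w assume "w \<in> Y"
      then have "w \<in> orb p T (a,0)" using a(1) by simp
      then obtain u v where "w = ((u * a) mod 3, (v * 0) mod int p)" by (rule orbE)
      then show "w \<in> C3_sub p" using C3 by simp
    qed
    moreover have "(a,0) \<in> carrier (C3p p)" using a C assms(2) by auto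
    then have "Y \<in> {orb p T z | z. z \<in> carrier (C3p p)}" using a(1) by blast
    ultimately show "Y \<in> restr_basic {orb p T z | z. z \<in> carrier (C3p p)} (C3_sub p)"
      by (simp add: restr_basic_def)
  qed
qed

lemma restr_Cp:
  assumes "(1,1) \<in> T" "p \<ge> 5"
  shows "restr_basic {orb p T z | z. z \<in> carrier (C3p p)} (Cp_sub p) = {orb p T (0,b) | b. b \<in> {0..<int p}}"
proof -
  have C: "carrier (C3p p) = {0..<3} \<times> {0..<int p}" using assms by (simp add: carrier_C3p)
  have Cp: "Cp_sub p = {0} \<times> {0..<int p}" using assms by (simp add: Cp_sub_def carrier_Zm)
  show ?thesis
  proof (intro Set.set_eqI iffI)
    fix Y assume Ym: "Y \<in> restr_basic {orb p T z | z. z \<in> carrier (C3p p)} (Cp_sub p)"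
    have Y1: "Y \<in> {orb p T z | z. z \<in> carrier (C3p p)}" and Y2: "Y \<subseteq> Cp_sub p"
      using Ym by (simp_all add: restr_basic_def)
    obtain z where z: "Y = orb p T z" "z \<in> carrier (C3p p)" using Y1 by blast
    obtain a b where zab: "z = (a,b)" by fastforce
    have ab1: "Y = orb p T (a,b)" using z(1) zab by simp
    have ab23: "a \<in> {0..<3}" "b \<in> {0..<int p}" using z(2) zab C by auto
    note ab = ab1 ab23 Y2
    have "(a,b) \<in> Y" using orb_self[OF assms(1), of "(a,b)" p] ab1 ab23 by simp
    then have "a = 0" using ab(4) Cp by auto
    then have "Y = orb p T (0,b)" using ab1 by simp
    then show "Y \<in> {orb p T (0,b) | b. b \<in> {0..<int p}}" using ab23(2) by blast
  next
    fix Y assume "Y \<in> {orb p T (0,b) | b. b \<in> {0..<int p}}"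
    then obtain b where b: "Y = orb p T (0,b)" "b \<in> {0..<int p}" by auto
    have "Y \<subseteq> Cp_sub p"
    proof
      fix w assume "w \<in> Y"
      then have "w \<in> orb p T (0,b)" using b(1) by simp
      then obtain u v where "w = ((u * 0) mod 3, (v * b) mod int p)" by (rule orbE)
      then show "w \<in> Cp_sub p" using Cp assms(2) by simp
    qed
    moreover have "(0,b) \<in> carrier (C3p p)" using b C by auto
    then have "Y \<in> {orb p T z | z. z \<in> carrier (C3p p)}" using b(1) by blast
    ultimately show "Y \<in> restr_basic {orb p T z | z. z \<in> carrier (C3p p)} (Cp_sub p)"
      by (simp add: restr_basic_def)
  qed
qed

lemma tensor_image:
  "tensor_basic G S1 S2 = (\<lambda>(P,Q). (\<lambda>(x, y). x \<otimes>\<^bsub>G\<^esub> y) ` (P \<times> Q)) ` (S1 \<times> S2)"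
  unfolding tensor_basic_def by (auto simp del: split_paired_All split_paired_Ex)

lemma img2: "(\<lambda>(P,Q). F P Q) ` ((g ` A) \<times> (h ` B)) = (\<lambda>(a,b). F (g a) (h b)) ` (A \<times> B)"
proof -
  have "(g ` A) \<times> (h ` B) = map_prod g h ` (A \<times> B)" using map_prod_surj_on[of g A "g ` A" h B "h ` B"] by simp
  then show ?thesis by (simp add: image_image case_prod_map_prod)
qed

lemma img_cong2: "(\<And>a b. F a b = G a b) \<Longrightarrow> (\<lambda>(a,b). F a b) ` A = (\<lambda>(a,b). G a b) ` A"
  by simp

lemma rect_tensor:
  assumes T1: "(1,1) \<in> T" and p5: "p \<ge> 5"
    and rect: "\<And>u v u' v'. (u,v) \<in> T \<Longrightarrow> (u',v') \<in> T \<Longrightarrow> (u,v') \<in> T"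
  shows "{orb p T z | z. z \<in> carrier (C3p p)} =
    tensor_basic (C3p p) (restr_basic {orb p T z | z. z \<in> carrier (C3p p)} (C3_sub p))
                         (restr_basic {orb p T z | z. z \<in> carrier (C3p p)} (Cp_sub p))"
proof -
  have C: "carrier (C3p p) = {0..<3} \<times> {0..<int p}" using p5 by (simp add: carrier_C3p)
  have key: "(\<lambda>(x, y). x \<otimes>\<^bsub>C3p p\<^esub> y) ` (orb p T (a,0) \<times> orb p T (0,b)) = orb p T (a,b)" for a b
  proof (intro Set.set_eqI iffI)
    fix w assume "w \<in> (\<lambda>(x, y). x \<otimes>\<^bsub>C3p p\<^esub> y) ` (orb p T (a,0) \<times> orb p T (0,b))"
    then obtain x y where xy: "x \<in> orb p T (a,0)" "y \<in> orb p T (0,b)" "w = x \<otimes>\<^bsub>C3p p\<^esub> y" by auto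
    obtain u v where uv: "(u,v) \<in> T" "x = ((u * a) mod 3, (v * 0) mod int p)" using xy(1) by (rule orbE)
    obtain u' v' where uv': "(u',v') \<in> T" "y = ((u' * 0) mod 3, (v' * b) mod int p)" using xy(2) by (rule orbE)
    have "w = ((u * a) mod 3, (v' * b) mod int p)" using xy(3) uv(2) uv'(2) by (simp add: mult_C3p)
    moreover have "(u, v') \<in> T" using rect uv(1) uv'(1) by blast
    ultimately show "w \<in> orb p T (a,b)" using orbI[of u v' T a b p] by simp
  next
    fix w assume "w \<in> orb p T (a,b)"
    then obtain u v where uv: "(u,v) \<in> T" and w: "w = ((u * a) mod 3, (v * b) mod int p)"
      by (rule orbE)
    have e: "w = (\<lambda>(x, y). x \<otimes>\<^bsub>C3p p\<^esub> y) (((u * a) mod 3, 0), (0, (v * b) mod int p))" using w by (simp add: mult_C3p)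
    have m1: "((u * a) mod 3, 0) \<in> orb p T (a,0)" using orbI[OF uv, of a 0 p] by simp
    have m2: "(0, (v * b) mod int p) \<in> orb p T (0,b)" using orbI[OF uv, of 0 b p] by simp
    show "w \<in> (\<lambda>(x, y). x \<otimes>\<^bsub>C3p p\<^esub> y) ` (orb p T (a,0) \<times> orb p T (0,b))"
      by (rule image_eqI[where f="\<lambda>(x, y). x \<otimes>\<^bsub>C3p p\<^esub> y" and x="(((u * a) mod 3, 0), (0, (v * b) mod int p))", OF e SigmaI[OF m1 m2]])
  qed
  have S1: "{orb p T (a, 0) |a. a \<in> {0..<3}} = (\<lambda>a. orb p T (a,0)) ` {0..<3}" by (rule Setcompr_eq_image)
  have S2: "{orb p T (0, b) |b. b \<in> {0..<int p}} = (\<lambda>b. orb p T (0,b)) ` {0..<int p}" by (rule Setcompr_eq_image)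
  have S0: "{orb p T z | z. z \<in> carrier (C3p p)} = orb p T ` ({0..<3} \<times> {0..<int p})"
    unfolding C by (rule Setcompr_eq_image)
  have "tensor_basic (C3p p) ((\<lambda>a. orb p T (a,0)) ` {0..<3}) ((\<lambda>b. orb p T (0,b)) ` {0..<int p})
     = (\<lambda>(P,Q). (\<lambda>(x, y). x \<otimes>\<^bsub>C3p p\<^esub> y) ` (P \<times> Q)) ` ((\<lambda>a. orb p T (a,0)) ` {0..<3} \<times> (\<lambda>b. orb p T (0,b)) ` {0..<int p})"
    by (rule tensor_image)
  also have "\<dots> = (\<lambda>(a,b). (\<lambda>(x, y). x \<otimes>\<^bsub>C3p p\<^esub> y) ` (orb p T (a,0) \<times> orb p T (0,b))) ` ({0..<3} \<times> {0..<int p})"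
    by (rule img2[where F="\<lambda>P Q. (\<lambda>(x, y). x \<otimes>\<^bsub>C3p p\<^esub> y) ` (P \<times> Q)" and g="\<lambda>a. orb p T (a,0)" and h="\<lambda>b. orb p T (0,b)"])
  also have "\<dots> = (\<lambda>(a,b). orb p T (a,b)) ` ({0..<3} \<times> {0..<int p})"
    by (rule img_cong2[where F="\<lambda>a b. (\<lambda>(x, y). x \<otimes>\<^bsub>C3p p\<^esub> y) ` (orb p T (a,0) \<times> orb p T (0,b))" and G="\<lambda>a b. orb p T (a,b)", OF key])
  also have "\<dots> = orb p T ` ({0..<3} \<times> {0..<int p})" by (simp only: case_prod_eta)
  finally have fin: "tensor_basic (C3p p) ((\<lambda>a. orb p T (a,0)) ` {0..<3}) ((\<lambda>b. orb p T (0,b)) ` {0..<int p})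
     = orb p T ` ({0..<3} \<times> {0..<int p})" .
  have R1: "restr_basic {orb p T z | z. z \<in> carrier (C3p p)} (C3_sub p) = (\<lambda>a. orb p T (a,0)) ` {0..<3}"
    by (rule trans[OF restr_C3[OF T1 p5] S1])
  have R2: "restr_basic {orb p T z | z. z \<in> carrier (C3p p)} (Cp_sub p) = (\<lambda>b. orb p T (0,b)) ` {0..<int p}"
    by (rule trans[OF restr_Cp[OF T1 p5] S2])
  have R: "tensor_basic (C3p p) (restr_basic {orb p T z | z. z \<in> carrier (C3p p)} (C3_sub p))
                         (restr_basic {orb p T z | z. z \<in> carrier (C3p p)} (Cp_sub p))
     = tensor_basic (C3p p) ((\<lambda>a. orb p T (a,0)) ` {0..<3}) ((\<lambda>b. orb p T (0,b)) ` {0..<int p})"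
    by (rule arg_cong2[where f="tensor_basic (C3p p)", OF R1 R2])
  show ?thesis by (rule trans[OF S0 trans[OF fin[symmetric] R[symmetric]]])
qed

lemma rk_full:
  assumes T1: "(1,1) \<in> T" and p5: "p \<ge> 5" and Ts: "T \<subseteq> {1..<3} \<times> {1..<int p}"
    and c: "card {orb p T (0,b) | b. b \<in> {0..<int p}} = 2"
    and v0: "v0 \<in> {1..<int p}"
  shows "\<exists>u. (u, v0) \<in> T"
proof (rule ccontr)
  assume nv: "\<not> (\<exists>u. (u, v0) \<in> T)"
  let ?X = "{orb p T (0,b) | b. b \<in> {0..<int p}}"
  have fin: "finite ?X"
  proof -
    have "?X = (\<lambda>b. orb p T (0,b)) ` {0..<int p}" by auto
    then show ?thesis by simp
  qed
  have o0: "orb p T (0,0) = {(0,0)}" using T1 by (auto simp: orb_def)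
  have o1: "(0,1) \<in> orb p T (0,1)" using orb_self[OF T1, of "(0,1)"] p5 by auto
  have ov0: "(0,v0) \<in> orb p T (0,v0)" using orb_self[OF T1, of "(0,v0)"] v0 by auto
  have nov0: "(0,v0) \<notin> orb p T (0,1)"
  proof
    assume "(0,v0) \<in> orb p T (0,1)"
    then obtain u v where "(u,v) \<in> T" "v0 = v mod int p" by (auto simp: orb_def)
    moreover then have "v \<in> {1..<int p}" using Ts by auto
    ultimately show False using nv by auto
  qed
  have d1: "orb p T (0,0) \<noteq> orb p T (0,1)"
  proof
    assume "orb p T (0,0) = orb p T (0,1)"
    then have "(0::int,1::int) \<in> {(0,0)}" using o0 o1 by simp
    then show False by simp
  qed
  have d2: "orb p T (0,0) \<noteq> orb p T (0,v0)"
  proof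
    assume "orb p T (0,0) = orb p T (0,v0)"
    then have "(0::int,v0) \<in> {(0,0)}" using o0 ov0 by simp
    then show False using v0 by simp
  qed
  have d3: "orb p T (0,1) \<noteq> orb p T (0,v0)" using nov0 ov0 by auto
  have "{orb p T (0,0), orb p T (0,1), orb p T (0,v0)} \<subseteq> ?X" using v0 p5 by auto
  then have "card {orb p T (0,0), orb p T (0,1), orb p T (0,v0)} \<le> card ?X" using fin by (rule card_mono[rotated])
  moreover have "card {orb p T (0,0), orb p T (0,1), orb p T (0,v0)} = 3" using d1 d2 d3 by simp
  ultimately show False using c by simp
qed


theorem lemma3p1:
  fixes p :: nat and K :: "(int \<times> int \<Rightarrow> int \<times> int) set"
  assumes "Factorial_Ring.prime p" and "p \<ge> 5"
    and "subgroup K (AutoGroup (C3p p))"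
    and "rk (restr_basic (cyc_basic (C3p p) K) (Cp_sub p)) = 2"
    and "cyc_basic (C3p p) K \<noteq>
           tensor_basic (C3p p) (restr_basic (cyc_basic (C3p p) K) (C3_sub p))
                                (restr_basic (cyc_basic (C3p p) K) (Cp_sub p))"
  shows "cyc_basic (C3p p) K = cyc_basic (C3p p) (W0 p)"
proof -
  note pr = assms(1) and p5 = assms(2) and sK = assms(3)
  let ?G = "C3p p" and ?AG = "AutoGroup (C3p p)" and ?U = "{1..<int p}"
  have gAG: "group ?AG" by (rule group.AutoGroup[OF group_C3p])
  have p2: "p \<ge> 2" using p5 by simp
  have C: "carrier ?G = {0..<3} \<times> {0..<int p}" using p5 by (simp add: carrier_C3p)
  have Kauto: "K \<subseteq> auto ?G" using subgroup.subset[OF sK] by (simp add: AutoGroup_carrier)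
  define T where "T = {(u,v). u \<in> {1..<3} \<and> v \<in> ?U \<and> MM p u v \<in> K}"
  have Ts: "T \<subseteq> {1..<3} \<times> ?U" by (auto simp: T_def)
  have MMK: "MM p u v \<in> K" if "(u,v) \<in> T" for u v using that by (simp add: T_def)
  have repr: "\<exists>u v. (u,v) \<in> T \<and> \<sigma> = MM p u v" if s: "\<sigma> \<in> K" for \<sigma>
  proof -
    have sa: "\<sigma> \<in> auto ?G" using s Kauto by blast
    define u where "u = fst (\<sigma> (1,0))"
    define v where "v = snd (\<sigma> (0,1))"
    have e: "\<sigma> = MM p u v" unfolding u_def v_def by (rule auto_MM(1)[OF pr p5 sa])
    have r: "u \<in> {1..<3}" "v \<in> ?U" unfolding u_def v_def by (rule auto_MM(2)[OF pr p5 sa], rule auto_MM(3)[OF pr p5 sa])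
    have "(u,v) \<in> T" using r s e by (simp add: T_def)
    then show ?thesis using e by blast
  qed
  have multK: "MM p u v \<otimes>\<^bsub>?AG\<^esub> MM p u' v' = MM p ((u * u') mod 3) ((v * v') mod int p)"
    if "(u,v) \<in> T" "(u',v') \<in> T" for u v u' v'
  proof -
    have "MM p u v \<in> auto ?G" "MM p u' v' \<in> auto ?G" using MMK that Kauto by auto
    then have "MM p u v \<otimes>\<^bsub>?AG\<^esub> MM p u' v' = compose (carrier ?G) (MM p u v) (MM p u' v')"
      by (rule AutoGroup_mult)
    also have "\<dots> = MM p ((u * u') mod 3) ((v * v') mod int p)" using p5 by (simp add: MM_compose)
    finally show ?thesis .
  qed
  have inT: "(a,b) \<in> T" if m: "MM p a b \<in> K" "a \<in> {0..<3}" "b \<in> {0..<int p}" for a b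
  proof -
    obtain u v where uv: "(u,v) \<in> T" "MM p a b = MM p u v" using repr[OF m(1)] by blast
    have "u \<in> {0..<3}" "v \<in> {0..<int p}" using uv(1) Ts by auto
    then have "a = u \<and> b = v" using MM_inj[OF p2 uv(2)] m by blast
    then show ?thesis using uv(1) by simp
  qed
  have Tmul: "((u * u') mod 3, (v * v') mod int p) \<in> T" if "(u,v) \<in> T" "(u',v') \<in> T" for u v u' v'
  proof -
    have "MM p u v \<otimes>\<^bsub>?AG\<^esub> MM p u' v' \<in> K" using MMK that subgroup.m_closed[OF sK] by blast
    then have "MM p ((u * u') mod 3) ((v * v') mod int p) \<in> K" using multK[OF that] by simp
    then show ?thesis by (rule inT) (use p5 in auto)
  qed
  have T11: "(1,1) \<in> T"
  proof -
    have "\<one>\<^bsub>?AG\<^esub> \<in> K" by (rule subgroup.one_closed[OF sK])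
    then have "MM p 1 1 \<in> K" by (simp add: AutoGroup_one MM_one)
    then show ?thesis by (rule inT) (use p5 in auto)
  qed
  have Tinv: "\<exists>u' w. (u',w) \<in> T \<and> (u * u') mod 3 = 1 \<and> (v * w) mod int p = 1" if uv: "(u,v) \<in> T" for u v
  proof -
    have sK1: "MM p u v \<in> K" by (rule MMK[OF uv])
    have "inv\<^bsub>?AG\<^esub> (MM p u v) \<in> K" using subgroup.m_inv_closed[OF sK sK1] .
    then obtain u' w where uw: "(u',w) \<in> T" "inv\<^bsub>?AG\<^esub> (MM p u v) = MM p u' w" using repr by blast
    have "MM p u v \<in> carrier ?AG" using sK1 subgroup.subset[OF sK] by blast
    then have "MM p u v \<otimes>\<^bsub>?AG\<^esub> inv\<^bsub>?AG\<^esub> (MM p u v) = \<one>\<^bsub>?AG\<^esub>" by (rule group.r_inv[OF gAG])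
    then have "MM p ((u * u') mod 3) ((v * w) mod int p) = MM p 1 1"
      using multK[OF uv uw(1)] uw(2) by (simp add: AutoGroup_one MM_one)
    then have "(u * u') mod 3 = 1 \<and> (v * w) mod int p = 1" using MM_inj[OF p2] p5 by auto
    then show ?thesis using uw(1) by blast
  qed
  have u12: "u = 1 \<or> u = 2" if "(u,v) \<in> T" for u v using that Ts by auto
  have vU: "v \<in> ?U" if "(u,v) \<in> T" for u v using that Ts by auto
  have orbK: "{\<sigma> x | \<sigma>. \<sigma> \<in> K} = orb p T x" if x: "x \<in> carrier ?G" for x
  proof (intro Set.set_eqI iffI)
    fix y assume "y \<in> {\<sigma> x | \<sigma>. \<sigma> \<in> K}"
    then obtain \<sigma> where s: "\<sigma> \<in> K" "y = \<sigma> x" by blast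
    obtain u v where uv: "(u,v) \<in> T" "\<sigma> = MM p u v" using repr[OF s(1)] by blast
    have "y = ((u * fst x) mod 3, (v * snd x) mod int p)" using s(2) uv(2) x by (simp add: MM_def)
    then show "y \<in> orb p T x" using uv(1) by (auto simp: orb_def)
  next
    fix y assume "y \<in> orb p T x"
    then obtain u v where uv: "(u,v) \<in> T" "y = ((u * fst x) mod 3, (v * snd x) mod int p)"
      by (auto simp: orb_def)
    have "y = MM p u v x" using uv(2) x by (simp add: MM_def)
    then show "y \<in> {\<sigma> x | \<sigma>. \<sigma> \<in> K}" using MMK[OF uv(1)] by blast
  qed
  have cycK: "cyc_basic ?G K = {orb p T z | z. z \<in> carrier ?G}"
  proof -
    have "cyc_basic ?G K = (\<lambda>x. {\<sigma> x | \<sigma>. \<sigma> \<in> K}) ` carrier ?G"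
      unfolding cyc_basic_def by (rule Setcompr_eq_image)
    also have "\<dots> = orb p T ` carrier ?G" by (rule image_cong[OF refl orbK])
    also have "\<dots> = {orb p T z | z. z \<in> carrier ?G}" by (rule Setcompr_eq_image[symmetric])
    finally show ?thesis .
  qed
  have c2: "card {orb p T (0,b) | b. b \<in> {0..<int p}} = 2"
    using assms(4) unfolding cycK restr_Cp[OF T11 p5] rk_def .
  have full: "\<exists>u. (u, v) \<in> T" if "v \<in> ?U" for v by (rule rk_full[OF T11 p5 Ts c2 that])
  have nrect: "\<not> (\<forall>u v u' v'. (u,v) \<in> T \<longrightarrow> (u',v') \<in> T \<longrightarrow> (u,v') \<in> T)"
  proof
    assume r: "\<forall>u v u' v'. (u,v) \<in> T \<longrightarrow> (u',v') \<in> T \<longrightarrow> (u,v') \<in> T"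
    have "{orb p T z | z. z \<in> carrier (C3p p)} =
      tensor_basic (C3p p) (restr_basic {orb p T z | z. z \<in> carrier (C3p p)} (C3_sub p))
                           (restr_basic {orb p T z | z. z \<in> carrier (C3p p)} (Cp_sub p))"
      by (rule rect_tensor[OF T11 p5]) (use r in blast)
    then show False using assms(5) unfolding cycK by simp
  qed
  have n21: "(2,1) \<notin> T"
  proof
    assume t21: "(2,1) \<in> T"
    have "(u,v') \<in> T" if a: "(u,v) \<in> T" "(u',v') \<in> T" for u v u' v'
    proof (cases "u = u'")
      case True then show ?thesis using a by simp
    next
      case False
      have "((2 * u') mod 3, (1 * v') mod int p) \<in> T" by (rule Tmul[OF t21 a(2)])
      moreover have "(2 * u') mod 3 = u" using u12[OF a(1)] u12[OF a(2)] False by auto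
      moreover have "(1 * v') mod int p = v'" using vU[OF a(2)] by simp
      ultimately show ?thesis by simp
    qed
    then show False using nrect by blast
  qed
  have uniq: "\<not> ((1,v) \<in> T \<and> (2,v) \<in> T)" for v
  proof
    assume b: "(1,v) \<in> T \<and> (2,v) \<in> T"
    obtain u' w where uw: "(u',w) \<in> T" "(1 * u') mod 3 = 1" "(v * w) mod int p = 1" using Tinv[of 1 v] b by blast
    have "u' = 1" using uw(2) u12[OF uw(1)] by auto
    then have "((2 * 1) mod 3, (v * w) mod int p) \<in> T" using Tmul[of 2 v 1 w] b uw(1) by simp
    then show False using n21 uw(3) by simp
  qed
  obtain v1 where v1: "(2,v1) \<in> T"
  proof (rule ccontr)
    assume "\<not> thesis"
    then have n2: "(2,v) \<notin> T" for v using that by blast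
    have "(u,v') \<in> T" if a: "(u,v) \<in> T" "(u',v') \<in> T" for u v u' v'
    proof -
      have "u = 1" using u12[OF a(1)] n2 a(1) by auto
      moreover have "u' = 1" using u12[OF a(2)] n2 a(2) by auto
      ultimately show ?thesis using a(2) by simp
    qed
    then show False using nrect by blast
  qed
  define H0 where "H0 = {v \<in> ?U. (1,v) \<in> T}"
  have H0s: "H0 \<subseteq> ?U" by (auto simp: H0_def)
  have two: "(2,v) \<in> T \<longleftrightarrow> v \<notin> H0" if v: "v \<in> ?U" for v
  proof
    assume "(2,v) \<in> T" then show "v \<notin> H0" using uniq[of v] by (auto simp: H0_def)
  next
    assume "v \<notin> H0"
    then have "(1,v) \<notin> T" using v by (auto simp: H0_def)
    moreover obtain u where "(u,v) \<in> T" using full[OF v] by blast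
    ultimately show "(2,v) \<in> T" using u12 by fastforce
  qed
  have one: "1 \<in> H0" using T11 p5 by (auto simp: H0_def)
  have mul: "(v * w) mod int p \<in> H0" if "v \<in> H0" "w \<in> H0" for v w
  proof -
    have "((1 * 1) mod 3, (v * w) mod int p) \<in> T" using Tmul[of 1 v 1 w] that by (auto simp: H0_def)
    then show ?thesis using vU by (auto simp: H0_def)
  qed
  have inv: "\<exists>w\<in>H0. (v * w) mod int p = 1" if v: "v \<in> H0" for v
  proof -
    obtain u' w where uw: "(u',w) \<in> T" "(1 * u') mod 3 = 1" "(v * w) mod int p = 1"
      using Tinv[of 1 v] v by (auto simp: H0_def)
    have "u' = 1" using uw(2) u12[OF uw(1)] by auto
    then have "w \<in> H0" using uw(1) vU[OF uw(1)] by (simp add: H0_def)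
    then show ?thesis using uw(3) by blast
  qed
  have v1U: "v1 \<in> ?U" using vU[OF v1] .
  define f where "f v = (v * v1) mod int p" for v
  have finj: "inj_on f ?U"
  proof (rule inj_onI)
    fix v w assume vw: "v \<in> ?U" "w \<in> ?U" "f v = f w"
    then have "(v * v1) mod int p = (w * v1) mod int p" by (simp add: f_def)
    then have "int p dvd v1 * (v - w)" by (metis mod_eq_dvd_iff right_diff_distrib mult.commute)
    then have "int p dvd (v - w)" using prime_unit_dvd[OF pr v1U] by blast
    then show "v = w" using vw by (metis atLeastLessThan_iff mod_pos_pos_trivial mod_eq_dvd_iff less_imp_le order_less_le_trans zero_less_one)
  qed
  have f1: "f ` H0 \<subseteq> ?U - H0"
  proof
    fix y assume "y \<in> f ` H0"
    then obtain v where v: "v \<in> H0" "y = f v" by auto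
    have "((2 * 1) mod 3, (v1 * v) mod int p) \<in> T" using Tmul[of 2 v1 1 v] v1 v by (auto simp: H0_def)
    then have t: "(2, y) \<in> T" using v(2) by (simp add: f_def mult.commute)
    then have "y \<in> ?U" using vU by blast
    then show "y \<in> ?U - H0" using two t by blast
  qed
  have f2: "f ` (?U - H0) \<subseteq> H0"
  proof
    fix y assume "y \<in> f ` (?U - H0)"
    then obtain v where v: "v \<in> ?U" "v \<notin> H0" "y = f v" by auto
    have "(2,v) \<in> T" using two v by blast
    then have "((2 * 2) mod 3, (v * v1) mod int p) \<in> T" using Tmul v1 by blast
    then have t: "(1, y) \<in> T" using v(3) by (simp add: f_def)
    then show "y \<in> H0" using vU[OF t] by (simp add: H0_def)
  qed
  have c1: "card H0 \<le> card (?U - H0)"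
    using card_inj_on_le[OF inj_on_subset[OF finj H0s] f1] by simp
  have c2': "card (?U - H0) \<le> card H0"
    using card_inj_on_le[OF inj_on_subset[OF finj Diff_subset] f2] H0s finite_subset by (simp add: finite_subset)
  have cU: "card ?U = 2 * card H0"
  proof -
    have "card (?U - H0) = card ?U - card H0" by (rule card_Diff_subset) (use H0s finite_subset in auto)
    moreover have "card H0 \<le> card ?U" by (rule card_mono) (use H0s in auto)
    ultimately show ?thesis using c1 c2' by linarith
  qed
  have I: "index2_sub p = mm p ` H0" by (rule index2_eq[OF pr p5 H0s one mul inv cU])
  have "K = W0 p"
  proof (intro Set.set_eqI iffI)
    fix \<sigma> assume s: "\<sigma> \<in> K"
    obtain u v where uv: "(u,v) \<in> T" "\<sigma> = MM p u v" using repr[OF s] by blast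
    have ur: "u \<in> {1..<3}" "v \<in> ?U" using uv(1) Ts by auto
    have a: "MM p u v \<in> auto ?G" using s uv(2) Kauto by blast
    have "u = 1 \<longleftrightarrow> v \<in> H0"
    proof
      assume "u = 1" then show "v \<in> H0" using uv(1) ur by (simp add: H0_def)
    next
      assume "v \<in> H0" then have "(2,v) \<notin> T" using two ur(2) by blast
      then show "u = 1" using u12[OF uv(1)] uv(1) by auto
    qed
    then have "MM p u v \<in> W0 p" using W0_iff[OF pr p5 ur a I H0s] by simp
    then show "\<sigma> \<in> W0 p" using uv(2) by simp
  next
    fix \<sigma> assume s: "\<sigma> \<in> W0 p"
    then have sa: "\<sigma> \<in> auto ?G" by (simp add: W0_def)
    define u where "u = fst (\<sigma> (1,0))"
    define v where "v = snd (\<sigma> (0,1))"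
    have e: "\<sigma> = MM p u v" unfolding u_def v_def by (rule auto_MM(1)[OF pr p5 sa])
    have r: "u \<in> {1..<3}" "v \<in> ?U" unfolding u_def v_def by (rule auto_MM(2)[OF pr p5 sa], rule auto_MM(3)[OF pr p5 sa])
    have a: "MM p u v \<in> auto ?G" using sa e by simp
    have "MM p u v \<in> W0 p" using s e by simp
    then have iff: "u = 1 \<longleftrightarrow> v \<in> H0" using W0_iff[OF pr p5 r a I H0s] by simp
    have "(u,v) \<in> T"
    proof (cases "u = 1")
      case True then show ?thesis using iff by (simp add: H0_def)
    next
      case False then have "u = 2" using r(1) by auto
      moreover have "v \<notin> H0" using iff False by simp
      ultimately show ?thesis using two r(2) by simp
    qed
    then show "\<sigma> \<in> K" using MMK e by simp
  qed
  then show ?thesis by simp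
qed

end
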